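(* For any configuration $G$, if $G$ is feasible then the algorithm Classifier outputs "Yes" when executed with $G$ as input.
   Context: Model. A configuration is a finite simple undirected connected graph $G$ with $n$ nodes, each node $v$ tagged with a non-negative integer $t_v$ (wakeup tag); smallest tag $0$, span $\sigma$ = largest tag. Nodes are anonymous and communicate in synchronous global rounds. A node $v$ wakes up in the first global round $r\le t_v$ in which it receives a message, if any, and otherwise in global round $t_v$; its local clock is $0$ in its wakeup round, it acts from local round $1$, and nodes do not know the global clock. In each round a node transmits a message to all neighbours, listens, or terminates. A listening node receives $M$ if exactly one neighbour transmits ($M$), hears collision noise (distinct from silence and messages) if at least two neighbours transmit, and silence otherwise; a transmitting node hears nothing. A DRIP is a common function mapping a node's history (what it heard in each local round $0,\ldots,i-1$, including whether/by which message it was woken) to its action in local round $i\ge1$, with every node eventually terminating permanently; a decision function maps each node's final history to $\{0,1\}$; a dedicated leader election algorithm for $G$ is a DRIP plus decision function such that exactly one node of $G$ outputs $1$; $G$ is feasible if one exists. Algorithm Classifier (centralized, input $G$): maintains a partition of the nodes into classes $\mathrm{class}(v)\in\{1,\ldots,\mathit{numClasses}\}$, initially all in class $1$. One iteration: for each node $v$, its label $L_v$ is the set of triples obtained as follows: for each neighbour $w$ with $\mathrm{class}(w)\ne\mathrm{class}(v)$ or $t_w\ne t_v$ form the pair $(\mathrm{class}(w),\sigma+1+t_w-t_v)$; for each distinct pair $(a,b)$ so formed, $L_v$ contains $(a,b,1)$ if exactly one neighbour yields it and $(a,b,* )$ otherwise. Then the partition is refined: two nodes share a new class iff they shared a class before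 and have equal labels. Main loop: for $i=1,\ldots,\lceil n/2\rceil$: record $\mathit{old}=\mathit{numClasses}$; do one iteration; if some class has exactly one node, output "Yes" and stop; else if the number of classes equals $\mathit{old}$, output "No" and stop. *)

theory Defs
  imports Complex_Main
begin

text \<open>A configuration: vertex set V, edge relation E (symmetric, irreflexive, on V),
  wakeup tags t. The graph must be finite, nonempty, connected; the smallest tag is 0.\<close>

definition is_config :: "'v set \<Rightarrow> ('v \<Rightarrow> 'v \<Rightarrow> bool) \<Rightarrow> ('v \<Rightarrow> nat) \<Rightarrow> bool" where
  "is_config V E t \<longleftrightarrow>
     finite V \<and> V \<noteq> {} \<and>
     (\<forall>a b. E a b \<longrightarrow> a \<in> V \<and> b \<in> V) \<and>
     (\<forall>a b. E a b \<longrightarrow> E b a) \<and> (\<forall>a. \<not> E a a) \<and>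
     (\<forall>u\<in>V. \<forall>w\<in>V. E\<^sup>*\<^sup>* u w) \<and>
     (\<exists>v\<in>V. t v = 0)"

definition span :: "'v set \<Rightarrow> ('v \<Rightarrow> nat) \<Rightarrow> nat" where
  "span V t = Max (t ` V)"

text \<open>What a node hears in a round: silence, collision noise, a message, or (when it
  transmits itself) nothing.\<close>
datatype 'm obs = Silence | Noise | Msg 'm | Sent

datatype 'm act = Transmit 'm | Listen | Terminate

text \<open>Message transmitted by a node in the current round, given its history so far
  (None = not awake yet).  A terminated node's history stops growing, and its action stays
  Terminate.\<close>
definition tx_of :: "('m obs list \<Rightarrow> 'm act) \<Rightarrow> 'm obs list option \<Rightarrow> 'm option" where
  "tx_of A ho = (case ho of
      Some h \<Rightarrow> (case A h of Transmit m \<Rightarrow> Some m | _ \<Rightarrow> None)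
    | None \<Rightarrow> None)"

definition hear :: "'v set \<Rightarrow> ('v \<Rightarrow> 'v \<Rightarrow> bool) \<Rightarrow> ('v \<Rightarrow> 'm option) \<Rightarrow> 'v \<Rightarrow> 'm obs" where
  "hear V E tx v = (let T = {w \<in> V. E v w \<and> tx w \<noteq> None} in
     if T = {} then Silence
     else if card T = 1 then Msg (the (tx (the_elem T)))
     else Noise)"

text \<open>hist V E t A r v: the history of node v (what it heard in local rounds 0,1,...)
  at the end of global round r, or None if v is not yet awake.  The DRIP A maps a history
  of length i (local rounds 0..i-1) to the action of local round i.\<close>
fun hist :: "'v set \<Rightarrow> ('v \<Rightarrow> 'v \<Rightarrow> bool) \<Rightarrow> ('v \<Rightarrow> nat) \<Rightarrow> ('m obs list \<Rightarrow> 'm act)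
               \<Rightarrow> nat \<Rightarrow> 'v \<Rightarrow> 'm obs list option" where
  "hist V E t A 0 v = (if t v = 0 then Some [Silence] else None)"
| "hist V E t A (Suc r) v =
     (let ob = hear V E (\<lambda>w. tx_of A (hist V E t A r w)) v in
      case hist V E t A r v of
        Some h \<Rightarrow> (case A h of
                      Terminate \<Rightarrow> Some h
                    | Transmit m \<Rightarrow> Some (h @ [Sent])
                    | Listen \<Rightarrow> Some (h @ [ob]))
      | None \<Rightarrow> (if t v = Suc r \<or> (\<exists>m. ob = Msg m) then Some [ob] else None))"

definition terminates_with ::
  "'v set \<Rightarrow> ('v \<Rightarrow> 'v \<Rightarrow> bool) \<Rightarrow> ('v \<Rightarrow> nat) \<Rightarrow> ('m obs list \<Rightarrow> 'm act) \<Rightarrow> 'v \<Rightarrow> 'm obs list \<Rightarrow> bool" where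
  "terminates_with V E t A v h \<longleftrightarrow> (\<exists>r. hist V E t A r v = Some h) \<and> A h = Terminate"

text \<open>A dedicated leader election algorithm: DRIP A with decision function d (True = output 1).\<close>
definition dedicated_le ::
  "'v set \<Rightarrow> ('v \<Rightarrow> 'v \<Rightarrow> bool) \<Rightarrow> ('v \<Rightarrow> nat) \<Rightarrow> ('m obs list \<Rightarrow> 'm act) \<Rightarrow> ('m obs list \<Rightarrow> bool) \<Rightarrow> bool" where
  "dedicated_le V E t A d \<longleftrightarrow>
     (\<forall>v\<in>V. \<exists>h. terminates_with V E t A v h) \<and>
     (\<exists>!v. v \<in> V \<and> (\<exists>h. terminates_with V E t A v h \<and> d h))"

definition feasible :: "'m itself \<Rightarrow> 'v set \<Rightarrow> ('v \<Rightarrow> 'v \<Rightarrow> bool) \<Rightarrow> ('v \<Rightarrow> nat) \<Rightarrow> bool" where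
  "feasible _ V E t \<longleftrightarrow> (\<exists>(A :: 'm obs list \<Rightarrow> 'm act) d. dedicated_le V E t A d)"

text \<open>A partition is represented by mapping each node to its class (a set of nodes).
  Labels: triples (class, sigma+1+t_w-t_v, exactly-one?).\<close>
definition label :: "'v set \<Rightarrow> ('v \<Rightarrow> 'v \<Rightarrow> bool) \<Rightarrow> ('v \<Rightarrow> nat) \<Rightarrow> ('v \<Rightarrow> 'v set) \<Rightarrow> 'v
                      \<Rightarrow> ('v set \<times> int \<times> bool) set" where
  "label V E t c v =
    (let N = {w \<in> V. E v w \<and> (c w \<noteq> c v \<or> t w \<noteq> t v)};
         pr = (\<lambda>w. (c w, int (span V t) + 1 + int (t w) - int (t v)))
     in {(a, b, card {w \<in> N. pr w = (a, b)} = 1) | a b. (a, b) \<in> pr ` N})"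

definition refine :: "'v set \<Rightarrow> ('v \<Rightarrow> 'v \<Rightarrow> bool) \<Rightarrow> ('v \<Rightarrow> nat) \<Rightarrow> ('v \<Rightarrow> 'v set) \<Rightarrow> ('v \<Rightarrow> 'v set)" where
  "refine V E t c = (\<lambda>v. {u \<in> c v. label V E t c u = label V E t c v})"

definition num_classes :: "'v set \<Rightarrow> ('v \<Rightarrow> 'v set) \<Rightarrow> nat" where
  "num_classes V c = card (c ` V)"

definition has_singleton :: "'v set \<Rightarrow> ('v \<Rightarrow> 'v set) \<Rightarrow> bool" where
  "has_singleton V c \<longleftrightarrow> (\<exists>v\<in>V. card (c v) = 1)"

text \<open>Main loop with k remaining iterations; Some True = "Yes", Some False = "No",
  None = loop exhausted without output.\<close>
primrec classifier_loop :: "'v set \<Rightarrow> ('v \<Rightarrow> 'v \<Rightarrow> bool) \<Rightarrow> ('v \<Rightarrow> nat) \<Rightarrow> nat \<Rightarrow> ('v \<Rightarrow> 'v set) \<Rightarrow> bool option" where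
  "classifier_loop V E t 0 c = None"
| "classifier_loop V E t (Suc k) c =
     (let c' = refine V E t c in
      if has_singleton V c' then Some True
      else if num_classes V c' = num_classes V c then Some False
      else classifier_loop V E t k c')"

definition classifier :: "'v set \<Rightarrow> ('v \<Rightarrow> 'v \<Rightarrow> bool) \<Rightarrow> ('v \<Rightarrow> nat) \<Rightarrow> bool option" where
  "classifier V E t = classifier_loop V E t (nat \<lceil>real (card V) / 2\<rceil>) (\<lambda>_. V)"

end

theory Submission
  imports Defs
begin

definition part :: "'v set \<Rightarrow> ('v \<Rightarrow> 'v set) \<Rightarrow> bool" where
  "part V c \<longleftrightarrow> (\<forall>v\<in>V. c v \<subseteq> V \<and> (\<forall>u\<in>V. u \<in> c v \<longleftrightarrow> c u = c v))"

lemma part_self: "part V c \<Longrightarrow> v \<in> V \<Longrightarrow> v \<in> c v"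
  by (auto simp: part_def)

lemma part_sub: "part V c \<Longrightarrow> v \<in> V \<Longrightarrow> c v \<subseteq> V"
  by (auto simp: part_def)

lemma part_eq: "part V c \<Longrightarrow> v \<in> V \<Longrightarrow> u \<in> c v \<Longrightarrow> c u = c v"
  by (auto simp: part_def)

lemma part_iff: "part V c \<Longrightarrow> v \<in> V \<Longrightarrow> u \<in> V \<Longrightarrow> u \<in> c v \<longleftrightarrow> c u = c v"
  by (auto simp: part_def)

lemma part_refine:
  assumes P: "part V c" shows "part V (refine V E t c)"
proof -
  have A: "refine V E t c v \<subseteq> V" if v: "v \<in> V" for v
    using part_sub[OF P v] unfolding refine_def by auto
  have B: "(u \<in> refine V E t c v) = (refine V E t c u = refine V E t c v)"
    if v: "v \<in> V" and u: "u \<in> V" for u v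
  proof
    assume "u \<in> refine V E t c v"
    then have "u \<in> c v" "label V E t c u = label V E t c v"
      unfolding refine_def by auto
    then have "c u = c v" "label V E t c u = label V E t c v"
      using part_iff[OF P v u] by auto
    then show "refine V E t c u = refine V E t c v" unfolding refine_def by simp
  next
    assume "refine V E t c u = refine V E t c v"
    moreover have "u \<in> refine V E t c u" using part_self[OF P u] unfolding refine_def by blast
    ultimately show "u \<in> refine V E t c v" by simp
  qed
  show ?thesis unfolding part_def using A B by blast
qed

lemma refine_eq_imp:
  assumes "part V c" "u \<in> V" "v \<in> V" "refine V E t c u = refine V E t c v"
  shows "c u = c v \<and> label V E t c u = label V E t c v"
proof -
  have "u \<in> refine V E t c u" using assms part_self unfolding refine_def by fastforce
  then have "u \<in> refine V E t c v" using assms by simp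
  then show ?thesis using assms part_iff unfolding refine_def by fastforce
qed

definition hcl :: "('v \<Rightarrow> 'v set) \<Rightarrow> 'v set \<Rightarrow> 'v set" where
  "hcl c X = c (SOME x. x \<in> X)"

lemma hcl_refine:
  assumes "part V c" "v \<in> V"
  shows "hcl c (refine V E t c v) = c v"
proof -
  have P': "part V (refine V E t c)" using assms part_refine by blast
  have "v \<in> refine V E t c v" using part_self[OF P' assms(2)] .
  then have ex: "(SOME x. x \<in> refine V E t c v) \<in> refine V E t c v" by (rule someI)
  then have "(SOME x. x \<in> refine V E t c v) \<in> c v" unfolding refine_def by blast
  then show ?thesis unfolding hcl_def using part_eq[OF assms] by simp
qed

lemma hcl_image:
  assumes "part V c"
  shows "c ` V = hcl c ` (refine V E t c ` V)"
  using hcl_refine[OF assms] by (force simp: image_image)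

lemma nc_mono:
  assumes "part V c" "finite V"
  shows "num_classes V c \<le> num_classes V (refine V E t c)"
  unfolding num_classes_def using hcl_image[OF assms(1)] assms(2)
  by (metis card_image_le finite_imageI)

lemma nc_eq_stable:
  assumes "part V c" "finite V" "num_classes V (refine V E t c) = num_classes V c"
  shows "\<forall>u\<in>V. \<forall>v\<in>V. c u = c v \<longrightarrow> label V E t c u = label V E t c v"
proof (intro ballI impI)
  fix u v assume uv: "u \<in> V" "v \<in> V" "c u = c v"
  have "card (hcl c ` (refine V E t c ` V)) = card (refine V E t c ` V)"
    using assms hcl_image[OF assms(1)] unfolding num_classes_def by metis
  then have inj: "inj_on (hcl c) (refine V E t c ` V)"
    using assms(2) by (simp add: eq_card_imp_inj_on)
  have "hcl c (refine V E t c u) = hcl c (refine V E t c v)"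
    using hcl_refine[OF assms(1)] uv by metis
  then have "refine V E t c u = refine V E t c v" using inj uv by (meson imageI inj_onD)
  then show "label V E t c u = label V E t c v" using refine_eq_imp[OF assms(1) uv(1,2)] by blast
qed

lemma nosing_count:
  assumes "part V c" "finite V" "\<not> has_singleton V c"
  shows "2 * num_classes V c \<le> card V"
proof -
  have U: "\<Union>(c ` V) = V" using part_self[OF assms(1)] part_sub[OF assms(1)] by auto
  have fin: "\<forall>X\<in>c ` V. finite X" by (auto intro: finite_subset[OF part_sub[OF assms(1)] assms(2)])
  have dis: "pairwise disjnt (c ` V)"
    unfolding pairwise_def disjnt_def using assms(1) part_eq part_sub by (smt (verit) disjoint_iff_not_equal imageE subsetD)
  have "card V = sum card (c ` V)" using card_Union_disjoint[OF dis] fin U by simp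
  moreover have "\<forall>X\<in>c ` V. 2 \<le> card X"
  proof
    fix X assume "X \<in> c ` V"
    then obtain v where v: "v \<in> V" "X = c v" by blast
    then have "v \<in> X" "finite X" using assms part_self fin by auto
    then have "card X \<noteq> 0" by auto
    moreover have "card X \<noteq> 1" using assms(3) v unfolding has_singleton_def by blast
    ultimately show "2 \<le> card X" by linarith
  qed
  then have "sum (\<lambda>_. 2) (c ` V) \<le> sum card (c ` V)" by (intro sum_mono) auto
  ultimately show ?thesis unfolding num_classes_def by simp
qed

lemma refine_same:
  assumes "part V c" "v \<in> V" "\<forall>u\<in>V. \<forall>v\<in>V. c u = c v \<longrightarrow> label V E t c u = label V E t c v"
  shows "refine V E t c v = c v"
  unfolding refine_def
proof (intro set_eqI iffI)
  fix u assume "u \<in> {u \<in> c v. label V E t c u = label V E t c v}" then show "u \<in> c v" by simp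
next
  fix u assume u: "u \<in> c v"
  have uV: "u \<in> V" using part_sub[OF assms(1,2)] u by blast
  have "c u = c v" using part_eq[OF assms(1,2) u] .
  then have "label V E t c u = label V E t c v" using assms(3)[rule_format, OF uV assms(2)] by simp
  then show "u \<in> {u \<in> c v. label V E t c u = label V E t c v}" using u by simp
qed


lemma label_unf:
  "label V E t c u = {(a, b, card {x \<in> {w \<in> V. E u w \<and> (c w \<noteq> c u \<or> t w \<noteq> t u)}.
        (c x, int (span V t) + 1 + int (t x) - int (t u)) = (a, b)} = 1) | a b.
     (a, b) \<in> (\<lambda>w. (c w, int (span V t) + 1 + int (t w) - int (t u))) `
        {w \<in> V. E u w \<and> (c w \<noteq> c u \<or> t w \<noteq> t u)}}"
  unfolding label_def Let_def by simp

lemma tag_const: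
  assumes cfg: "is_config V E t" and P: "part V c"
   and stab: "\<forall>u\<in>V. \<forall>v\<in>V. c u = c v \<longrightarrow> label V E t c u = label V E t c v"
  shows "\<forall>u\<in>V. \<forall>v\<in>V. c u = c v \<longrightarrow> t u = t v"
proof -
  define m where "m v = Min (t ` c v)" for v
  have fin: "finite V" and EV: "\<And>a b. E a b \<Longrightarrow> a \<in> V \<and> b \<in> V"
    and conn: "\<forall>u\<in>V. \<forall>w\<in>V. E\<^sup>*\<^sup>* u w" and z: "\<exists>z\<in>V. t z = 0"
    using cfg unfolding is_config_def by auto
  have finc: "finite (c v)" if "v \<in> V" for v using finite_subset[OF part_sub[OF P that] fin] .
  have mle: "m v \<le> t x" if "v \<in> V" "x \<in> c v" for v x
    unfolding m_def using finc[OF that(1)] that(2) by simp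
  have mex: "\<exists>x\<in>c v. t x = m v" if "v \<in> V" for v
  proof -
    have "t ` c v \<noteq> {}" using part_self[OF P that] by blast
    then have "m v \<in> t ` c v" unfolding m_def using finc[OF that] by (intro Min_in) auto
    then show ?thesis by force
  qed
  have edge: "int (t u) - int (m u) \<le> int (t w) - int (m w)" if e: "E u w" for u w
  proof -
    have uV: "u \<in> V" and wV: "w \<in> V" using EV[OF e] by auto
    show ?thesis
    proof (cases "c w = c u \<and> t w = t u")
      case True then show ?thesis unfolding m_def by simp
    next
      case False
      obtain u' where u': "u' \<in> c u" "t u' = m u" using mex[OF uV] by blast
      have u'V: "u' \<in> V" using part_sub[OF P uV] u'(1) by blast
      have cu': "c u' = c u" using part_eq[OF P uV u'(1)] .
      have lab: "label V E t c u' = label V E t c u" using stab u'V uV cu' by blast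
      let ?b = "int (span V t) + 1 + int (t w) - int (t u)"
      have "(c w, ?b) \<in> (\<lambda>w. (c w, int (span V t) + 1 + int (t w) - int (t u))) `
        {w \<in> V. E u w \<and> (c w \<noteq> c u \<or> t w \<noteq> t u)}" using False wV e by auto
      then have "\<exists>\<beta>. (c w, ?b, \<beta>) \<in> label V E t c u" unfolding label_unf by blast
      then obtain \<beta> where "(c w, ?b, \<beta>) \<in> label V E t c u'" using lab by auto
      then have "(c w, ?b) \<in> (\<lambda>w. (c w, int (span V t) + 1 + int (t w) - int (t u'))) `
        {w \<in> V. E u' w \<and> (c w \<noteq> c u' \<or> t w \<noteq> t u')}" unfolding label_unf by blast
      then obtain w' where w'N: "w' \<in> {w \<in> V. E u' w \<and> (c w \<noteq> c u' \<or> t w \<noteq> t u')}"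
          and eq: "(c w, ?b) = (c w', int (span V t) + 1 + int (t w') - int (t u'))"
        by (rule imageE)
      have w': "w' \<in> V" "c w' = c w" "int (span V t) + 1 + int (t w') - int (t u') = ?b"
        using w'N eq by simp_all
      have "w' \<in> c w" using part_self[OF P w'(1)] w'(2) by simp
      then have "m w \<le> t w'" using mle[OF wV] by simp
      then show ?thesis using w'(3) u'(2) by linarith
    qed
  qed
  obtain z where zV: "z \<in> V" and tz: "t z = 0" using z by blast
  have mz: "m z = 0" using mle[OF zV part_self[OF P zV]] tz by simp
  have path: "int (t w) - int (m w) \<le> int (t y) - int (m y)" if "E\<^sup>*\<^sup>* w y" for w y
    using that
  proof (induction rule: rtranclp_induct)
    case base then show ?case by simp
  next
    case (step y z) then show ?case using edge[of y z] by linarith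
  qed
  have tm: "t w = m w" if wV: "w \<in> V" for w
  proof -
    have "int (t w) - int (m w) \<le> 0" using path[of w z] conn wV zV tz mz by simp
    moreover have "m w \<le> t w" using mle[OF wV part_self[OF P wV]] .
    ultimately show ?thesis by linarith
  qed
  show ?thesis
  proof (intro ballI impI)
    fix u v assume "u \<in> V" "v \<in> V" "c u = c v"
    then show "t u = t v" using tm unfolding m_def by metis
  qed
qed


lemma one_char:
  "card {a\<in>A. S (cl a)} = 1 \<longleftrightarrow>
    (\<exists>X. S X \<and> card {a\<in>A. cl a = X} = 1 \<and> (\<forall>Y. S Y \<and> Y \<noteq> X \<longrightarrow> {a\<in>A. cl a = Y} = {}))"
proof
  assume "card {a\<in>A. S (cl a)} = 1"
  then obtain a0 where a0: "{a\<in>A. S (cl a)} = {a0}" by (auto simp: card_1_singleton_iff)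
  have "a0 \<in> {a\<in>A. S (cl a)}" using a0 by simp
  then have a0A: "a0 \<in> A" "S (cl a0)" by simp_all
  have uniq: "a = a0" if "a \<in> A" "S (cl a)" for a
  proof -
    have "a \<in> {a\<in>A. S (cl a)}" using that by simp
    then show ?thesis using a0 by simp
  qed
  have "{a\<in>A. cl a = cl a0} = {a0}"
  proof (intro set_eqI iffI)
    fix a assume "a \<in> {a\<in>A. cl a = cl a0}"
    then have "a \<in> A" "S (cl a)" using a0A by simp_all
    then show "a \<in> {a0}" using uniq[of a] by simp
  qed (use a0A in simp)
  moreover have "\<forall>Y. S Y \<and> Y \<noteq> cl a0 \<longrightarrow> {a\<in>A. cl a = Y} = {}"
  proof (intro allI impI)
    fix Y assume Y: "S Y \<and> Y \<noteq> cl a0"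
    show "{a\<in>A. cl a = Y} = {}"
    proof (rule ccontr)
      assume "{a\<in>A. cl a = Y} \<noteq> {}"
      then obtain a where "a \<in> A" "cl a = Y" by blast
      then show False using uniq[of a] Y by simp
    qed
  qed
  moreover have "S (cl a0)" using a0A by simp
  ultimately show "\<exists>X. S X \<and> card {a\<in>A. cl a = X} = 1 \<and> (\<forall>Y. S Y \<and> Y \<noteq> X \<longrightarrow> {a\<in>A. cl a = Y} = {})"
    by (intro exI[of _ "cl a0"]) simp
next
  assume "\<exists>X. S X \<and> card {a\<in>A. cl a = X} = 1 \<and> (\<forall>Y. S Y \<and> Y \<noteq> X \<longrightarrow> {a\<in>A. cl a = Y} = {})"
  then obtain X a0 where X: "S X" "{a\<in>A. cl a = X} = {a0}" "\<forall>Y. S Y \<and> Y \<noteq> X \<longrightarrow> {a\<in>A. cl a = Y} = {}"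
    by (auto simp: card_1_singleton_iff)
  have "{a\<in>A. S (cl a)} = {a0}"
  proof (intro set_eqI iffI)
    fix a assume a: "a \<in> {a\<in>A. S (cl a)}"
    show "a \<in> {a0}"
    proof (cases "cl a = X")
      case True then show ?thesis using a X(2) by blast
    next
      case False then have "{a\<in>A. cl a = cl a} = {}" using X(3) a by blast
      then show ?thesis using a by blast
    qed
  next
    fix a assume "a \<in> {a0}"
    moreover have "a0 \<in> {a\<in>A. cl a = X}" using X(2) by simp
    ultimately show "a \<in> {a\<in>A. S (cl a)}" using X(1) by simp
  qed
  then show "card {a\<in>A. S (cl a)} = 1" by simp
qed

lemma the_char:
  assumes "card {a\<in>A. S (cl a)} = 1" "S X" "card {a\<in>A. cl a = X} = 1"
  shows "cl (the_elem {a\<in>A. S (cl a)}) = X"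
proof -
  obtain a0 where a0: "{a\<in>A. S (cl a)} = {a0}" using assms(1) by (auto simp: card_1_singleton_iff)
  obtain a1 where a1: "{a\<in>A. cl a = X} = {a1}" using assms(3) by (auto simp: card_1_singleton_iff)
  have "a1 \<in> {a\<in>A. cl a = X}" using a1 by simp
  then have "a1 \<in> {a\<in>A. S (cl a)}" using assms(2) by simp
  then have "a1 = a0" using a0 by blast
  then show ?thesis using a0 a1 by auto
qed

lemma sel_generic:
  assumes emp: "\<And>X. {a\<in>A. cl a = X} = {} \<longleftrightarrow> {b\<in>B. cl b = X} = {}"
   and one: "\<And>X. card {a\<in>A. cl a = X} = 1 \<longleftrightarrow> card {b\<in>B. cl b = X} = 1"
  shows "{a\<in>A. S (cl a)} = {} \<longleftrightarrow> {b\<in>B. S (cl b)} = {}"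
   and "card {a\<in>A. S (cl a)} = 1 \<longleftrightarrow> card {b\<in>B. S (cl b)} = 1"
   and "card {a\<in>A. S (cl a)} = 1 \<Longrightarrow> cl (the_elem {a\<in>A. S (cl a)}) = cl (the_elem {b\<in>B. S (cl b)})"
proof -
  have e1: "{a\<in>A. S (cl a)} = {} \<longleftrightarrow> (\<forall>X. S X \<longrightarrow> {a\<in>A. cl a = X} = {})" by blast
  have e2: "{a\<in>B. S (cl a)} = {} \<longleftrightarrow> (\<forall>X. S X \<longrightarrow> {a\<in>B. cl a = X} = {})" by blast
  show "{a\<in>A. S (cl a)} = {} \<longleftrightarrow> {b\<in>B. S (cl b)} = {}" unfolding e1 e2 using emp by blast
  show o: "card {a\<in>A. S (cl a)} = 1 \<longleftrightarrow> card {b\<in>B. S (cl b)} = 1" unfolding one_char using emp one by meson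
  assume c1: "card {a\<in>A. S (cl a)} = 1"
  then obtain X where X: "S X" "card {a\<in>A. cl a = X} = 1" unfolding one_char by blast
  have "cl (the_elem {a\<in>A. S (cl a)}) = X" using the_char[OF c1 X] .
  moreover have "cl (the_elem {b\<in>B. S (cl b)}) = X" using the_char[of B S cl X] c1 o X one by blast
  ultimately show "cl (the_elem {a\<in>A. S (cl a)}) = cl (the_elem {b\<in>B. S (cl b)})" by simp
qed


lemma N_eq:
  assumes tagc: "\<forall>u\<in>V. \<forall>v\<in>V. c u = c v \<longrightarrow> t u = t v" and u: "u \<in> V"
  shows "{w \<in> V. E u w \<and> (c w \<noteq> c u \<or> t w \<noteq> t u)} = {w \<in> V. E u w \<and> c w \<noteq> c u}"
  using tagc u by blast

lemma label_unf2:
  assumes tagc: "\<forall>u\<in>V. \<forall>v\<in>V. c u = c v \<longrightarrow> t u = t v" and u: "u \<in> V"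
  shows "label V E t c u = {(a, b, card {x \<in> {w \<in> V. E u w \<and> c w \<noteq> c u}.
        (c x, int (span V t) + 1 + int (t x) - int (t u)) = (a, b)} = 1) | a b.
     (a, b) \<in> (\<lambda>w. (c w, int (span V t) + 1 + int (t w) - int (t u))) `
        {w \<in> V. E u w \<and> c w \<noteq> c u}}"
  unfolding label_unf N_eq[OF assms] ..

lemma lab_emp:
  assumes tagc: "\<forall>u\<in>V. \<forall>v\<in>V. c u = c v \<longrightarrow> t u = t v" and u: "u \<in> V"
  shows "{w \<in> {w \<in> V. E u w \<and> c w \<noteq> c u}. c w = X} \<noteq> {} \<longleftrightarrow> (\<exists>b \<beta>. (X, b, \<beta>) \<in> label V E t c u)"
proof
  assume "{w \<in> {w \<in> V. E u w \<and> c w \<noteq> c u}. c w = X} \<noteq> {}"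
  then obtain w where w: "w \<in> {w \<in> V. E u w \<and> c w \<noteq> c u}" "c w = X" by blast
  let ?pr = "\<lambda>w. (c w, int (span V t) + 1 + int (t w) - int (t u))"
  have "(X, snd (?pr w)) \<in> ?pr ` {w \<in> V. E u w \<and> c w \<noteq> c u}" using w by force
  then show "\<exists>b \<beta>. (X, b, \<beta>) \<in> label V E t c u" unfolding label_unf2[OF assms] by blast
next
  assume "\<exists>b \<beta>. (X, b, \<beta>) \<in> label V E t c u"
  then obtain b where "(X, b) \<in> (\<lambda>w. (c w, int (span V t) + 1 + int (t w) - int (t u))) `
        {w \<in> V. E u w \<and> c w \<noteq> c u}" unfolding label_unf2[OF assms] by blast
  then obtain w where "w \<in> {w \<in> V. E u w \<and> c w \<noteq> c u}"
     "(X, b) = (c w, int (span V t) + 1 + int (t w) - int (t u))" by (rule imageE)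
  then show "{w \<in> {w \<in> V. E u w \<and> c w \<noteq> c u}. c w = X} \<noteq> {}" by auto
qed

lemma lab_one:
  assumes tagc: "\<forall>u\<in>V. \<forall>v\<in>V. c u = c v \<longrightarrow> t u = t v" and u: "u \<in> V"
  shows "card {w \<in> {w \<in> V. E u w \<and> c w \<noteq> c u}. c w = X} = 1 \<longleftrightarrow> (\<exists>b. (X, b, True) \<in> label V E t c u)"
proof -
  define Au where "Au = {w \<in> V. E u w \<and> c w \<noteq> c u}"
  define pr where "pr = (\<lambda>w. (c w, int (span V t) + 1 + int (t w) - int (t u)))"
  have L: "label V E t c u = {(a, b, card {x \<in> Au. pr x = (a, b)} = 1) | a b. (a, b) \<in> pr ` Au}"
    unfolding label_unf2[OF assms] Au_def pr_def ..
  have same: "{x \<in> Au. pr x = pr w1} = {x \<in> Au. c x = c w1}" if w1: "w1 \<in> Au" for w1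
  proof (intro set_eqI iffI)
    fix x assume "x \<in> {x \<in> Au. pr x = pr w1}" then show "x \<in> {x \<in> Au. c x = c w1}"
      unfolding pr_def by simp
  next
    fix x assume x: "x \<in> {x \<in> Au. c x = c w1}"
    have xV: "x \<in> V" and w1V: "w1 \<in> V" using x w1 unfolding Au_def by auto
    have "c x = c w1" using x by simp
    then have "t x = t w1" using tagc[rule_format, OF xV w1V] by simp
    then show "x \<in> {x \<in> Au. pr x = pr w1}" using x unfolding pr_def by simp
  qed
  show ?thesis unfolding Au_def[symmetric] L
  proof
    assume "card {w \<in> Au. c w = X} = 1"
    then obtain w0 where w0: "{w \<in> Au. c w = X} = {w0}" by (auto simp: card_1_singleton_iff)
    have "w0 \<in> {w \<in> Au. c w = X}" using w0 by simp
    then have w0A: "w0 \<in> Au" "c w0 = X" by simp_all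
    define b0 where "b0 = snd (pr w0)"
    have pw: "pr w0 = (X, b0)" unfolding pr_def b0_def using w0A by simp
    have im: "(X, b0) \<in> pr ` Au" using pw w0A(1) by (metis image_eqI)
    have "card {x \<in> Au. pr x = pr w0} = 1" using same[OF w0A(1)] w0 w0A by simp
    then have c1: "card {x \<in> Au. pr x = (X, b0)} = 1" using pw by simp
    have "(X, b0, True) = (X, b0, card {x \<in> Au. pr x = (X, b0)} = 1) \<and> (X, b0) \<in> pr ` Au"
      using c1 im by simp
    then show "\<exists>b. (X, b, True) \<in> {(a, b, card {x \<in> Au. pr x = (a, b)} = 1) | a b. (a, b) \<in> pr ` Au}"
      by blast
  next
    assume "\<exists>b. (X, b, True) \<in> {(a, b, card {x \<in> Au. pr x = (a, b)} = 1) | a b. (a, b) \<in> pr ` Au}"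
    then obtain b where c1: "card {x \<in> Au. pr x = (X, b)} = 1" and im: "(X, b) \<in> pr ` Au" by auto
    from im obtain w1 where w1': "(X, b) = pr w1" "w1 \<in> Au" by (rule imageE)
    then have w1: "w1 \<in> Au" "pr w1 = (X, b)" by simp_all
    have "c w1 = X" using w1(2) unfolding pr_def by simp
    then show "card {w \<in> Au. c w = X} = 1" using same[OF w1(1)] c1 w1(2) by simp
  qed
qed


lemma hear_eq:
  assumes cfg: "is_config V E t" and P: "part V c"
   and stab: "\<forall>u\<in>V. \<forall>v\<in>V. c u = c v \<longrightarrow> label V E t c u = label V E t c v"
   and tagc: "\<forall>u\<in>V. \<forall>v\<in>V. c u = c v \<longrightarrow> t u = t v"
   and txc: "\<And>u v. u \<in> V \<Longrightarrow> v \<in> V \<Longrightarrow> c u = c v \<Longrightarrow> tx u = tx v"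
   and u: "u \<in> V" and v: "v \<in> V" and cuv: "c u = c v" and txu: "tx u = None"
  shows "hear V E tx u = hear V E tx v"
proof -
  define S where "S X = (\<exists>w\<in>V. c w = X \<and> tx w \<noteq> None)" for X
  have txv: "tx v = None" using txc[OF u v cuv] txu by simp
  have T: "{w \<in> V. E x w \<and> tx w \<noteq> None} = {w \<in> {w \<in> V. E x w \<and> c w \<noteq> c x}. S (c w)}"
    if xV: "x \<in> V" and tx: "tx x = None" for x
  proof (intro set_eqI iffI)
    fix w assume w: "w \<in> {w \<in> V. E x w \<and> tx w \<noteq> None}"
    then have wV: "w \<in> V" "E x w" "tx w \<noteq> None" by simp_all
    have "c w \<noteq> c x" using txc[OF wV(1) xV] wV(3) tx by auto
    moreover have "S (c w)" unfolding S_def using wV by blast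
    ultimately show "w \<in> {w \<in> {w \<in> V. E x w \<and> c w \<noteq> c x}. S (c w)}" using wV by simp
  next
    fix w assume w: "w \<in> {w \<in> {w \<in> V. E x w \<and> c w \<noteq> c x}. S (c w)}"
    then have wV: "w \<in> V" "E x w" "S (c w)" by simp_all
    then obtain w' where w': "w' \<in> V" "c w' = c w" "tx w' \<noteq> None" unfolding S_def by blast
    have "tx w \<noteq> None" using txc[OF w'(1) wV(1) w'(2)] w'(3) by simp
    then show "w \<in> {w \<in> V. E x w \<and> tx w \<noteq> None}" using wV by simp
  qed
  have lab: "label V E t c u = label V E t c v" using stab[rule_format, OF u v cuv] .
  have emp: "{w \<in> {w \<in> V. E u w \<and> c w \<noteq> c u}. c w = X} = {} \<longleftrightarrow>
             {w \<in> {w \<in> V. E v w \<and> c w \<noteq> c v}. c w = X} = {}" for X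
  proof -
    note e1 = lab_emp[OF tagc u, of E X, unfolded lab]
    note e2 = lab_emp[OF tagc v, of E X]
    show ?thesis using e1 e2 by argo
  qed
  have one: "card {w \<in> {w \<in> V. E u w \<and> c w \<noteq> c u}. c w = X} = 1 \<longleftrightarrow>
             card {w \<in> {w \<in> V. E v w \<and> c w \<noteq> c v}. c w = X} = 1" for X
  proof -
    note e1 = lab_one[OF tagc u, of E X, unfolded lab]
    note e2 = lab_one[OF tagc v, of E X]
    show ?thesis using e1 e2 by argo
  qed
  note G = sel_generic[of "{w \<in> V. E u w \<and> c w \<noteq> c u}" c "{w \<in> V. E v w \<and> c w \<noteq> c v}" S, OF emp one]
  define Tu where "Tu = {w \<in> V. E u w \<and> tx w \<noteq> None}"
  define Tv where "Tv = {w \<in> V. E v w \<and> tx w \<noteq> None}"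
  have Tu: "Tu = {w \<in> {w \<in> V. E u w \<and> c w \<noteq> c u}. S (c w)}" unfolding Tu_def using T[OF u txu] .
  have Tv: "Tv = {w \<in> {w \<in> V. E v w \<and> c w \<noteq> c v}. S (c w)}" unfolding Tv_def using T[OF v txv] .
  have e: "Tu = {} \<longleftrightarrow> Tv = {}" using G(1) unfolding Tu Tv .
  have o: "card Tu = 1 \<longleftrightarrow> card Tv = 1" using G(2) unfolding Tu Tv .
  have m: "tx (the_elem Tu) = tx (the_elem Tv)" if c1: "card Tu = 1"
  proof -
    have cl: "c (the_elem Tu) = c (the_elem Tv)" using G(3) c1 unfolding Tu Tv by blast
    obtain a where a: "Tu = {a}" using c1 by (auto simp: card_1_singleton_iff)
    obtain b where b: "Tv = {b}" using c1 o by (auto simp: card_1_singleton_iff)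
    have aV: "a \<in> V" using a unfolding Tu_def by blast
    have bV: "b \<in> V" using b unfolding Tv_def by blast
    have "c a = c b" using cl a b by simp
    then have "tx a = tx b" using txc[OF aV bV] by simp
    then show ?thesis using a b by simp
  qed
  show ?thesis unfolding hear_def Let_def Tu_def[symmetric] Tv_def[symmetric]
    using e o m by simp
qed

lemma hist_inv:
  assumes cfg: "is_config V E t" and P: "part V c"
   and stab: "\<forall>u\<in>V. \<forall>v\<in>V. c u = c v \<longrightarrow> label V E t c u = label V E t c v"
   and tagc: "\<forall>u\<in>V. \<forall>v\<in>V. c u = c v \<longrightarrow> t u = t v"
  shows "\<forall>u\<in>V. \<forall>v\<in>V. c u = c v \<longrightarrow> hist V E t A r u = hist V E t A r v"
proof (induction r)
  case 0
  show ?case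
  proof (intro ballI impI)
    fix u v assume "u \<in> V" "v \<in> V" "c u = c v"
    then have "t u = t v" using tagc[rule_format] by blast
    then show "hist V E t A 0 u = hist V E t A 0 v" by simp
  qed
next
  case (Suc r)
  define tx where "tx = (\<lambda>w. tx_of A (hist V E t A r w))"
  have txc: "tx u = tx v" if "u \<in> V" "v \<in> V" "c u = c v" for u v
    using Suc.IH[rule_format, OF that] unfolding tx_def by simp
  show ?case
  proof (intro ballI impI)
    fix u v assume u: "u \<in> V" and v: "v \<in> V" and cuv: "c u = c v"
    have hr: "hist V E t A r u = hist V E t A r v" using Suc.IH[rule_format, OF u v cuv] .
    have tuv: "t u = t v" using tagc[rule_format, OF u v cuv] .
    have ob: "hear V E (\<lambda>w. tx_of A (hist V E t A r w)) u = hear V E (\<lambda>w. tx_of A (hist V E t A r w)) v"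
      if "tx_of A (hist V E t A r u) = None"
      using hear_eq[OF cfg P stab tagc txc u v cuv] that unfolding tx_def by simp
    show "hist V E t A (Suc r) u = hist V E t A (Suc r) v"
    proof (cases "hist V E t A r u")
      case None
      then have "tx_of A (hist V E t A r u) = None" unfolding tx_of_def by simp
      then show ?thesis using None hr ob tuv by (simp add: Let_def)
    next
      case (Some h)
      show ?thesis
      proof (cases "A h")
        case Listen
        then have "tx_of A (hist V E t A r u) = None" using Some unfolding tx_of_def by simp
        then show ?thesis using Some hr ob Listen by (simp add: Let_def)
      next
        case (Transmit m)
        then show ?thesis using Some hr by (simp add: Let_def)
      next
        case Terminate
        then show ?thesis using Some hr by (simp add: Let_def)
      qed
    qed
  qed
qed


lemma stable_infeasible:
  assumes cfg: "is_config V E t" and P: "part V c"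
   and stab: "\<forall>u\<in>V. \<forall>v\<in>V. c u = c v \<longrightarrow> label V E t c u = label V E t c v"
   and nos: "\<not> has_singleton V c"
  shows "\<not> dedicated_le V E t A d"
proof
  assume D: "dedicated_le V E t A d"
  have tagc: "\<forall>u\<in>V. \<forall>v\<in>V. c u = c v \<longrightarrow> t u = t v" using tag_const[OF cfg P stab] .
  have HI: "\<forall>u\<in>V. \<forall>v\<in>V. c u = c v \<longrightarrow> hist V E t A r u = hist V E t A r v" for r
    using hist_inv[OF cfg P stab tagc] .
  have fin: "finite V" using cfg unfolding is_config_def by simp
  have ex1: "\<exists>!v. v \<in> V \<and> (\<exists>h. terminates_with V E t A v h \<and> d h)" using D unfolding dedicated_le_def by simp
  then obtain v0 h where v0: "v0 \<in> V" "terminates_with V E t A v0 h" "d h" by blast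
  have finc: "finite (c v0)" using finite_subset[OF part_sub[OF P v0(1)] fin] .
  have v0c: "v0 \<in> c v0" using part_self[OF P v0(1)] .
  have "card (c v0) \<noteq> 1" using nos v0(1) unfolding has_singleton_def by blast
  then have "\<not> c v0 \<subseteq> {v0}"
  proof (intro notI)
    assume "c v0 \<subseteq> {v0}"
    then have "c v0 = {v0}" using v0c by blast
    then show False using \<open>card (c v0) \<noteq> 1\<close> by simp
  qed
  then obtain v1 where v1: "v1 \<in> c v0" "v1 \<noteq> v0" by blast
  have v1V: "v1 \<in> V" using part_sub[OF P v0(1)] v1(1) by blast
  have cv1: "c v1 = c v0" using part_eq[OF P v0(1) v1(1)] .
  have "hist V E t A r v1 = hist V E t A r v0" for r using HI[rule_format, OF v1V v0(1) cv1] .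
  then have "terminates_with V E t A v1 h" using v0(2) unfolding terminates_with_def by simp
  then have "v1 \<in> V \<and> (\<exists>h. terminates_with V E t A v1 h \<and> d h)" using v1V v0(3) by blast
  moreover have "v0 \<in> V \<and> (\<exists>h. terminates_with V E t A v0 h \<and> d h)" using v0 by blast
  ultimately show False using ex1 v1(2) by blast
qed

lemma loop:
  assumes cfg: "is_config V E t" and feas: "feasible TYPE('m) V E t"
  shows "part V c \<Longrightarrow> card V + 2 \<le> 2 * (num_classes V c + k) \<Longrightarrow> (\<not> has_singleton V c \<or> 0 < k)
         \<Longrightarrow> classifier_loop V E t k c = Some True"
proof (induction k arbitrary: c)
  have fin: "finite V" using cfg unfolding is_config_def by simp
  case 0
  then have "2 * num_classes V c \<le> card V" using nosing_count[OF 0(1) fin] by simp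
  then show ?case using 0(2) by simp
next
  have fin: "finite V" using cfg unfolding is_config_def by simp
  case (Suc k)
  define c' where "c' = refine V E t c"
  have P': "part V c'" unfolding c'_def using part_refine[OF Suc.prems(1)] .
  show ?case
  proof (cases "has_singleton V c'")
    case True then show ?thesis unfolding c'_def by (simp add: Let_def)
  next
    case False
    show ?thesis
    proof (cases "num_classes V c' = num_classes V c")
      case True
      have stab: "\<forall>u\<in>V. \<forall>v\<in>V. c u = c v \<longrightarrow> label V E t c u = label V E t c v"
        using nc_eq_stable[OF Suc.prems(1) fin] True unfolding c'_def by blast
      have "c' v = c v" if "v \<in> V" for v unfolding c'_def using refine_same[OF Suc.prems(1) that stab] .
      then have "\<not> has_singleton V c" using False unfolding has_singleton_def by auto
      then have "\<not> dedicated_le V E t A d" for A :: "'m obs list \<Rightarrow> 'm act" and d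
        using stable_infeasible[OF cfg Suc.prems(1) stab] by blast
      then show ?thesis using feas unfolding feasible_def by blast
    next
      case False2: False
      have "num_classes V c \<le> num_classes V c'" unfolding c'_def using nc_mono[OF Suc.prems(1) fin] .
      then have "num_classes V c < num_classes V c'" using False2 by simp
      then have "card V + 2 \<le> 2 * (num_classes V c' + k)" using Suc.prems(2) by simp
      then have "classifier_loop V E t k c' = Some True" using Suc.IH[OF P'] False by blast
      then show ?thesis using False False2 unfolding c'_def by (simp add: Let_def)
    qed
  qed
qed

lemma ceil_half: "n \<le> 2 * nat \<lceil>real n / 2\<rceil>"
proof -
  have "real n / 2 \<le> real_of_int \<lceil>real n / 2\<rceil>" by (rule le_of_int_ceiling)
  then have "int n \<le> 2 * \<lceil>real n / 2\<rceil>" by linarith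
  then show ?thesis by linarith
qed

theorem lemma12:
  fixes V :: "'v set" and E :: "'v \<Rightarrow> 'v \<Rightarrow> bool" and t :: "'v \<Rightarrow> nat"
  assumes "is_config V E t"
    and "feasible TYPE('m) V E t"
  shows "classifier V E t = Some True"
proof -
  have fin: "finite V" and ne: "V \<noteq> {}" using assms(1) unfolding is_config_def by auto
  have P0: "part V (\<lambda>_. V)" unfolding part_def by simp
  have nc0: "num_classes V (\<lambda>_. V) = 1" 
  proof -
    have "(\<lambda>_. V) ` V = {V}" using ne by auto
    then show ?thesis unfolding num_classes_def by simp
  qed
  have pos: "0 < card V" using fin ne by (simp add: card_gt_0_iff)
  have h: "card V \<le> 2 * nat \<lceil>real (card V) / 2\<rceil>" by (rule ceil_half)
  then have kpos: "0 < nat \<lceil>real (card V) / 2\<rceil>" using pos by linarith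
  have "card V + 2 \<le> 2 * (num_classes V (\<lambda>_. V) + nat \<lceil>real (card V) / 2\<rceil>)" using h nc0 by simp
  then show ?thesis unfolding classifier_def using loop[OF assms P0] kpos by blast
qed

end
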